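(* Let $(X,\mu)$ be a standard probability space with an ergodic measure-preserving $\mathbb{Z}$-action generated by $T$, let $B$ be a separable reflexive Banach space, let $c:\mathbb{Z}\times X\to\mathrm{Isom}(B)$ be a Borel cocycle ($c(n+m,x)=c(n,x)c(m,T^nx)$, $(n,x)\mapsto c(n,x).b$ measurable), and let $s:X\times\mathbb{Z}\times\mathbb{Z}\to B$ satisfy $s_x(m,l)+s_x(l,n)=s_x(m,n)$, $c(k,x).s_{T^kx}(m,n)=s_x(m+k,n+k)$, with $x\mapsto s_x(m,n)$ weakly measurable and $x\mapsto\|s_x(0,n)\|_B$ integrable for all $n$. Let $\rho_x(m,n)=\|s_x(m,n)\|_B$ and $A=\lim_{n\to\infty}\frac1n\int_X\rho_x(0,n)\,d\mu(x)$. Then there exist an integrable function $\varphi$ on $X$ with $\int_X\varphi\,d\mu=A$ and nonnegative measurable functions $r_n$ ($n\ge1$) such that \[ \rho_x(0,n)=\sum_{k=0}^{n-1}\varphi(T^kx)+r_n(x) \] for a.e. $x$ and all $n\ge1$, where $(r_n)$ is subadditive ($r_{n+m}(x)\le r_n(x)+r_m(T^nx)$) with $\lim_{n\to\infty}\frac1n\int_X r_n\,d\mu=0$.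
   Context: Weakly measurable: $x\mapsto\langle\phi,s_x(m,n)\rangle$ measurable for all $\phi\in B^*$. *)

theory Defs
  imports "HOL-Analysis.Analysis" "HOL-Probability.Probability"
begin

definition standard_borel :: "'a measure \<Rightarrow> bool" where
  "standard_borel M \<longleftrightarrow>
     (\<exists>d. Metric_space (space M) d \<and> Metric_space.mcomplete (space M) d \<and>
          separable_space (Metric_space.mtopology (space M) d) \<and>
          sets M = sigma_sets (space M) {U. openin (Metric_space.mtopology (space M) d) U})"

definition standard_prob_space :: "'a measure \<Rightarrow> bool" where
  "standard_prob_space M \<longleftrightarrow> prob_space M \<and> standard_borel M"

text \<open>T generates a measure-preserving Z-action: T is a bimeasurable bijection of the
space preserving the measure.\<close>
definition invertible_mpt :: "'a measure \<Rightarrow> ('a \<Rightarrow> 'a) \<Rightarrow> bool" where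
  "invertible_mpt M T \<longleftrightarrow>
     T \<in> measurable M M \<and> bij_betw T (space M) (space M) \<and>
     inv_into (space M) T \<in> measurable M M \<and>
     (\<forall>A\<in>sets M. emeasure M (T -` A \<inter> space M) = emeasure M A)"

definition ergodic :: "'a measure \<Rightarrow> ('a \<Rightarrow> 'a) \<Rightarrow> bool" where
  "ergodic M T \<longleftrightarrow>
     (\<forall>A\<in>sets M. T -` A \<inter> space M = A \<longrightarrow> measure M A = 0 \<or> measure M A = 1)"

definition Tpow :: "'a measure \<Rightarrow> ('a \<Rightarrow> 'a) \<Rightarrow> int \<Rightarrow> 'a \<Rightarrow> 'a" where
  "Tpow M T n = (if 0 \<le> n then T ^^ nat n else inv_into (space M) T ^^ nat (- n))"

definition separable_banach :: "'b::banach itself \<Rightarrow> bool" where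
  "separable_banach _ \<longleftrightarrow> (\<exists>C::'b set. countable C \<and> closure C = UNIV)"

definition reflexive_banach :: "'b::banach itself \<Rightarrow> bool" where
  "reflexive_banach _ \<longleftrightarrow>
     (\<forall>\<Phi> :: ('b \<Rightarrow>\<^sub>L real) \<Rightarrow>\<^sub>L real. \<exists>b::'b. \<forall>f. blinfun_apply \<Phi> f = blinfun_apply f b)"

definition lin_isometry :: "('b::real_normed_vector \<Rightarrow> 'b) \<Rightarrow> bool" where
  "lin_isometry U \<longleftrightarrow> linear U \<and> (\<forall>b. norm (U b) = norm b) \<and> surj U"

end

theory Submission
  imports Defs
begin

lemma fekete_aux:
  fixes a :: "nat \<Rightarrow> real"
  assumes sub: "\<And>n m. a (n+m) \<le> a n + a m"
  shows "a (q*m + r) \<le> real q * a m + a r"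
proof (induction q)
  case 0 then show ?case by simp
next
  case (Suc q)
  have "a (Suc q * m + r) = a (m + (q*m + r))" by (simp add: algebra_simps)
  also have "\<dots> \<le> a m + a (q*m+r)" by (rule sub)
  also have "\<dots> \<le> a m + (real q * a m + a r)" using Suc by simp
  finally show ?case by (simp add: algebra_simps)
qed

lemma fekete:
  fixes a :: "nat \<Rightarrow> real"
  assumes sub: "\<And>n m. a (n+m) \<le> a n + a m" and nn: "\<And>n. 0 \<le> a n"
  shows "(\<lambda>n. a n / real n) \<longlonglongrightarrow> Inf ((\<lambda>n. a n / real n) ` {1..})"
    and "\<And>n. n \<ge> 1 \<Longrightarrow> Inf ((\<lambda>n. a n / real n) ` {1..}) \<le> a n / real n"
proof -
  define L where "L = Inf ((\<lambda>n. a n / real n) ` {1..})"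
  have bdd: "bdd_below ((\<lambda>n. a n / real n) ` {1..})"
    by (rule bdd_belowI[of _ 0]) (use nn in auto)
  show low: "\<And>n. n \<ge> 1 \<Longrightarrow> Inf ((\<lambda>n. a n / real n) ` {1..}) \<le> a n / real n"
    by (rule cInf_lower) (use bdd in auto)
  have up: "a n / real n \<le> a m / real m + (\<Sum>r<m. a r) / real n" if "m \<ge> 1" "n \<ge> 1" for m n
  proof -
    have "a n = a ((n div m) * m + n mod m)" by simp
    also have "\<dots> \<le> real (n div m) * a m + a (n mod m)" by (rule fekete_aux[OF sub])
    also have "a (n mod m) \<le> (\<Sum>r<m. a r)"
      by (rule member_le_sum) (use that nn in auto)
    finally have 1: "a n \<le> real (n div m) * a m + (\<Sum>r<m. a r)" by simp
    have "real (n div m) * real m \<le> real n"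
      by (metis div_times_less_eq_dividend of_nat_le_iff of_nat_mult)
    hence "real (n div m) \<le> real n / real m" using that by (simp add: field_simps)
    hence "real (n div m) * a m \<le> real n / real m * a m" using nn by (intro mult_right_mono) auto
    hence "a n \<le> real n * (a m / real m) + (\<Sum>r<m. a r)" using 1 by simp
    thus ?thesis using that by (simp add: field_simps)
  qed
  show "(\<lambda>n. a n / real n) \<longlonglongrightarrow> Inf ((\<lambda>n. a n / real n) ` {1..})"
    unfolding L_def[symmetric]
  proof (rule order_tendstoI)
    fix y assume "y < L"
    show "\<forall>\<^sub>F n in sequentially. y < a n / real n"
      using eventually_ge_at_top[of 1]
      by eventually_elim (use low \<open>y < L\<close> L_def in force)
  next
    fix y assume "L < y"
    then obtain z where z: "z \<in> (\<lambda>n. a n / real n) ` {1..}" "z < y"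
      using cInf_lessD[of "(\<lambda>n. a n / real n) ` {1..}" y] unfolding L_def by auto
    then obtain m where m: "m \<ge> 1" "a m / real m < y" by auto
    have "(\<lambda>n. (\<Sum>r<m. a r) / real n) \<longlonglongrightarrow> 0"
      by (intro tendsto_divide_0[OF tendsto_const] filterlim_at_top_imp_at_infinity filterlim_real_sequentially)
    hence "\<forall>\<^sub>F n in sequentially. (\<Sum>r<m. a r) / real n < y - a m / real m"
      using m by (intro order_tendstoD) auto
    thus "\<forall>\<^sub>F n in sequentially. a n / real n < y"
      using eventually_ge_at_top[of 1]
      by eventually_elim (use up m in force)
  qed
qed

lemma sum_split_add: "(\<Sum>j<P+n. (g::nat\<Rightarrow>real) j) = (\<Sum>j<P. g j) + (\<Sum>k<n. g (P+k))"
  by (induction n) (simp_all add: add.assoc)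

lemma tele_bound:
  fixes d :: "nat \<Rightarrow> nat \<Rightarrow> real"
  assumes refl: "\<And>a. d a a = 0" and sym: "\<And>a b. d a b = d b a"
    and tri: "\<And>a b c. d a c \<le> d a b + d b c"
  shows "(\<Sum>k<n. \<Sum>j<P. d k (k+j+1) - d (k+1) (k+j+1)) \<le> real P * d 0 n + 2 * (\<Sum>j<n. d 0 (j+1))"
proof -
  define D where "D k = (\<Sum>j<P. d k (k+j+1))" for k
  have c1: "(\<Sum>j<P. d k (k+j+1) - d (k+1) (k+j+1)) = D k - D (k+1) + d (k+1) (k+1+P)" for k
  proof -
    define g where "g i = d (k+1) (k+1+i)" for i
    have "(\<Sum>j<Suc P. g j) = g 0 + (\<Sum>j<P. g (Suc j))" by (rule sum.lessThan_Suc_shift)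
    moreover have "(\<Sum>j<Suc P. g j) = (\<Sum>j<P. g j) + g P" by simp
    moreover have "g 0 = 0" using refl by (simp add: g_def)
    moreover have "(\<Sum>j<P. g (Suc j)) = D (k+1)" by (simp add: g_def D_def add.assoc)
    ultimately have "(\<Sum>j<P. g j) = D (k+1) - g P" by linarith
    moreover have "(\<Sum>j<P. d (k+1) (k+j+1)) = (\<Sum>j<P. g j)"
      by (intro sum.cong) (auto simp: g_def algebra_simps)
    ultimately show ?thesis by (simp add: sum_subtractf D_def g_def)
  qed
  have c2: "(\<Sum>k<n. \<Sum>j<P. d k (k+j+1) - d (k+1) (k+j+1)) = D 0 - D n + (\<Sum>k<n. d (k+1) (k+1+P))"
  proof (induction n)
    case (Suc n)
    show ?case using Suc c1[of n] by simp
  qed simp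
  have b1: "d (k+1) (k+1+P) \<le> d 0 (k+1) + d 0 (k+1+P)" for k
    using tri[of "k+1" "k+1+P" 0] sym[of "k+1" 0] by simp
  have b2: "D n \<ge> (\<Sum>j<P. d 0 (n+j+1) - d 0 n)"
    unfolding D_def by (intro sum_mono) (smt (verit) tri)
  have e1: "(\<Sum>j<P+n. d 0 (j+1)) = (\<Sum>j<P. d 0 (j+1)) + (\<Sum>k<n. d 0 (k+1+P))"
    by (subst sum_split_add) (simp add: algebra_simps)
  have e2: "(\<Sum>j<n+P. d 0 (j+1)) = (\<Sum>j<n. d 0 (j+1)) + (\<Sum>j<P. d 0 (n+j+1))"
    by (subst sum_split_add) (simp add: algebra_simps)
  have "(\<Sum>k<n. d (k+1) (k+1+P)) \<le> (\<Sum>k<n. d 0 (k+1)) + (\<Sum>k<n. d 0 (k+1+P))"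
    by (subst sum.distrib[symmetric]) (intro sum_mono b1)
  moreover have "(\<Sum>j<P. d 0 (n+j+1) - d 0 n) = (\<Sum>j<P. d 0 (n+j+1)) - real P * d 0 n"
    by (simp add: sum_subtractf)
  ultimately show ?thesis using c2 b2 e1 e2 by (simp add: D_def add.commute)
qed

lemma amgm_abs:
  fixes a t w :: real assumes "t > 0" "w > 0"
  shows "\<bar>a\<bar> \<le> (t * a\<^sup>2 / w + w / t) / 2"
proof -
  have "0 \<le> (t * \<bar>a\<bar> - w)\<^sup>2" by simp
  hence "2 * t * \<bar>a\<bar> * w \<le> t\<^sup>2 * a\<^sup>2 + w\<^sup>2" by (simp add: power2_eq_square algebra_simps)
  hence "2 * \<bar>a\<bar> \<le> (t\<^sup>2 * a\<^sup>2 + w\<^sup>2) / (t * w)" using assms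
    by (simp add: field_simps)
  also have "(t\<^sup>2 * a\<^sup>2 + w\<^sup>2) / (t * w) = t * a\<^sup>2 / w + w / t" using assms
    by (simp add: field_simps power2_eq_square)
  finally show ?thesis by simp
qed

lemma para_pt: "((p+q)/2)\<^sup>2/w + ((p-q)/2)\<^sup>2/w = (p\<^sup>2/w + q\<^sup>2/(w::real))/2"
proof (cases "w = 0")
  case False thus ?thesis by (simp add: field_simps power2_eq_square)
qed simp
lemma sc_pt: "(p - q)\<^sup>2/w = 4 * (((p - q)/2)\<^sup>2/(w::real))"
proof (cases "w = 0")
  case False thus ?thesis by (simp add: field_simps power2_eq_square)
qed simp

lemma komlos:
  fixes M :: "'x measure" and G :: "'x \<Rightarrow> real" and C :: "nat \<Rightarrow> ('x \<Rightarrow> real) set"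
  assumes fin: "finite_measure M"
    and Gint: "integrable M G"
    and ne: "\<And>N. C N \<noteq> {}"
    and mono: "\<And>N. C (Suc N) \<subseteq> C N"
    and mid: "\<And>N h g. h \<in> C N \<Longrightarrow> g \<in> C N \<Longrightarrow> (\<lambda>x. (h x + g x) / 2) \<in> C N"
    and meas: "\<And>N h. h \<in> C N \<Longrightarrow> h \<in> borel_measurable M"
    and bnd: "\<And>N h x. h \<in> C N \<Longrightarrow> x \<in> space M \<Longrightarrow> \<bar>h x\<bar> \<le> G x"
  shows "\<exists>h \<phi>. (\<forall>k. h k \<in> C k) \<and> \<phi> \<in> borel_measurable M \<and> (AE x in M. (\<lambda>k. h k x) \<longlonglongrightarrow> \<phi> x)"
proof -
  interpret finite_measure M by (rule fin)
  define W where "W x = G x + 1" for x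
  have Wint: "integrable M W" unfolding W_def using Gint by auto
  have Gmeas[measurable]: "G \<in> borel_measurable M" using Gint by auto
  define Q where "Q h = (\<integral>x. (h x)\<^sup>2 / W x \<partial>M)" for h :: "'x \<Rightarrow> real"
  define adm where "adm h \<longleftrightarrow> h \<in> borel_measurable M \<and> (\<forall>x\<in>space M. \<bar>h x\<bar> \<le> 2 * G x)" for h :: "'x \<Rightarrow> real"
  have Cadm: "adm h" if "h \<in> C N" for h N
  proof -
    have "\<bar>h x\<bar> \<le> 2 * G x" if "x \<in> space M" for x
      using bnd[OF \<open>h \<in> C N\<close> that] abs_ge_zero[of "h x"] by linarith
    thus ?thesis using meas[OF that] unfolding adm_def by auto
  qed
  have Gnn: "0 \<le> G x" if "x \<in> space M" for x
    using bnd[of _ 0 x] ne[of 0] that by (auto intro: order_trans[OF abs_ge_zero])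
  have Wpos: "W x > 0" if "x \<in> space M" for x using Gnn[OF that] by (simp add: W_def)
  have qint: "integrable M (\<lambda>x. (h x)\<^sup>2 / W x)" if "adm h" for h
  proof (rule Bochner_Integration.integrable_bound[where f="\<lambda>x. 4 * G x"])
    show "integrable M (\<lambda>x. 4 * G x)" using Gint by auto
    have [measurable]: "h \<in> borel_measurable M" using that unfolding adm_def by auto
    show "(\<lambda>x. (h x)\<^sup>2 / W x) \<in> borel_measurable M" unfolding W_def by measurable
    show "AE x in M. norm ((h x)\<^sup>2 / W x) \<le> norm (4 * G x)"
    proof (rule AE_I2)
      fix x assume x: "x \<in> space M"
      have h: "\<bar>h x\<bar> \<le> 2 * G x" using that x unfolding adm_def by auto
      have "(h x)\<^sup>2 \<le> (2 * G x)\<^sup>2" using h by (metis abs_le_square_iff abs_of_nonneg Gnn[OF x] mult_nonneg_nonneg zero_le_numeral)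
      also have "\<dots> \<le> 4 * G x * W x" using Gnn[OF x] by (simp add: W_def power2_eq_square algebra_simps)
      finally have "(h x)\<^sup>2 / W x \<le> 4 * G x" using Wpos[OF x] by (simp add: field_simps)
      thus "norm ((h x)\<^sup>2 / W x) \<le> norm (4 * G x)" using Wpos[OF x] Gnn[OF x] by simp
    qed
  qed
  have Qnn: "0 \<le> Q h" for h unfolding Q_def
    by (rule integral_nonneg_AE) (use Wpos in \<open>auto intro!: AE_I2 divide_nonneg_pos\<close>)
  have Qle: "Q h \<le> 4 * integral\<^sup>L M G" if "h \<in> C N" for h N
  proof -
    have "Q h \<le> (\<integral>x. 4 * G x \<partial>M)" unfolding Q_def
    proof (rule integral_mono[OF qint[OF Cadm[OF that]]])
      show "integrable M (\<lambda>x. 4 * G x)" using Gint by auto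
      fix x assume x: "x \<in> space M"
      have "(h x)\<^sup>2 \<le> (G x)\<^sup>2" using bnd[OF that x] by (metis abs_le_square_iff abs_of_nonneg Gnn[OF x])
      also have "\<dots> \<le> 4 * G x * W x" using Gnn[OF x] by (simp add: W_def power2_eq_square algebra_simps)
      finally show "(h x)\<^sup>2 / W x \<le> 4 * G x" using Wpos[OF x] by (simp add: field_simps)
    qed
    thus ?thesis by simp
  qed
  have adm_mid: "adm (\<lambda>x. (a x + b x) / 2)" "adm (\<lambda>x. (a x - b x) / 2)" if "adm a" "adm b" for a b
  proof -
    have "\<bar>(a x + b x) / 2\<bar> \<le> 2 * G x \<and> \<bar>(a x - b x) / 2\<bar> \<le> 2 * G x" if "x \<in> space M" for x
    proof -
      have "\<bar>a x\<bar> \<le> 2 * G x" "\<bar>b x\<bar> \<le> 2 * G x" using that \<open>adm a\<close> \<open>adm b\<close> unfolding adm_def by auto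
      thus ?thesis by (simp add: abs_le_iff)
    qed
    thus "adm (\<lambda>x. (a x + b x) / 2)" "adm (\<lambda>x. (a x - b x) / 2)"
      using that unfolding adm_def by auto
  qed
  have para: "Q (\<lambda>x. (a x + b x) / 2) + Q (\<lambda>x. (a x - b x) / 2) = (Q a + Q b) / 2"
    if ab: "adm a" "adm b" for a b
  proof -
    have "Q (\<lambda>x. (a x + b x) / 2) + Q (\<lambda>x. (a x - b x) / 2)
        = (\<integral>x. ((a x + b x) / 2)\<^sup>2 / W x + ((a x - b x) / 2)\<^sup>2 / W x \<partial>M)"
      unfolding Q_def using qint[OF adm_mid(1)[OF ab]] qint[OF adm_mid(2)[OF ab]] by simp
    also have "\<dots> = (\<integral>x. ((a x)\<^sup>2 / W x + (b x)\<^sup>2 / W x) / 2 \<partial>M)"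
      by (simp only: para_pt)
    also have "\<dots> = (\<integral>x. (a x)\<^sup>2 / W x + (b x)\<^sup>2 / W x \<partial>M) / 2"
      by (rule integral_divide_zero)
    also have "\<dots> = (Q a + Q b) / 2"
      unfolding Q_def using qint[OF ab(1)] qint[OF ab(2)] by simp
    finally show ?thesis .
  qed
  have Qscale: "Q (\<lambda>x. a x - b x) = 4 * Q (\<lambda>x. (a x - b x) / 2)" for a b
  proof -
    have "Q (\<lambda>x. a x - b x) = (\<integral>x. 4 * (((a x - b x) / 2)\<^sup>2 / W x) \<partial>M)"
      unfolding Q_def by (simp only: sc_pt)
    thus ?thesis unfolding Q_def by (simp only: integral_mult_right_zero)
  qed
  have L1: "(\<integral>x. \<bar>a x\<bar> \<partial>M) \<le> (t * Q a + integral\<^sup>L M W / t) / 2" if "adm a" "t > 0" for a t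
  proof -
    have am[measurable]: "a \<in> borel_measurable M" using that unfolding adm_def by auto
    have "(\<integral>x. \<bar>a x\<bar> \<partial>M) \<le> (\<integral>x. (t * ((a x)\<^sup>2 / W x) + W x / t) / 2 \<partial>M)"
    proof (rule integral_mono)
      show "integrable M (\<lambda>x. \<bar>a x\<bar>)"
        by (rule Bochner_Integration.integrable_bound[where f="\<lambda>x. 2 * G x"])
           (use Gint that Gnn in \<open>auto simp: adm_def intro!: AE_I2\<close>)
      show "integrable M (\<lambda>x. (t * ((a x)\<^sup>2 / W x) + W x / t) / 2)"
      proof -
        have "integrable M (\<lambda>x. t * ((a x)\<^sup>2 / W x))" using qint[OF that(1)] by (rule integrable_mult_right)
        moreover have "integrable M (\<lambda>x. W x / t)" using Wint by auto
        ultimately have "integrable M (\<lambda>x. t * ((a x)\<^sup>2 / W x) + W x / t)" by (rule Bochner_Integration.integrable_add)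
        thus ?thesis by (rule integrable_divide_zero)
      qed
      fix x assume "x \<in> space M"
      thus "\<bar>a x\<bar> \<le> (t * ((a x)\<^sup>2 / W x) + W x / t) / 2"
        using amgm_abs[OF that(2) Wpos, of x "a x"] by simp
    qed
    also have "\<dots> = (t * Q a + integral\<^sup>L M W / t) / 2"
    proof -
      have i1: "integrable M (\<lambda>x. t * ((a x)\<^sup>2 / W x))" using qint[OF that(1)] by (rule integrable_mult_right)
      have i2: "integrable M (\<lambda>x. W x / t)" using Wint by auto
      show ?thesis unfolding Q_def
        by (simp only: integral_divide_zero Bochner_Integration.integral_add[OF i1 i2] integral_mult_right_zero)
    qed
    finally show ?thesis .
  qed
  define d where "d N = Inf (Q ` C N)" for N
  have bddQ: "bdd_below (Q ` C N)" for N by (rule bdd_belowI[of _ 0]) (use Qnn in auto)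
  have d_le: "d N \<le> Q h" if "h \<in> C N" for h N
    unfolding d_def by (rule cInf_lower) (use that bddQ in auto)
  have C_anti: "C M \<subseteq> C N" if "N \<le> M" for N M
    using lift_Suc_antimono_le[of C, OF mono that] by simp
  have d_inc: "incseq d"
    unfolding incseq_def d_def
  proof (intro allI impI cInf_superset_mono)
    fix m n :: nat assume "m \<le> n"
    show "Q ` C n \<noteq> {}" using ne by auto
    show "bdd_below (Q ` C m)" by (rule bddQ)
    show "Q ` C n \<subseteq> Q ` C m" using C_anti[OF \<open>m \<le> n\<close>] by auto
  qed
  have d_bdd: "d N \<le> 4 * integral\<^sup>L M G" for N
    using ne[of N] d_le Qle by (meson all_not_in_conv order_trans)
  define D where "D = (SUP N. d N)"
  have d_lim: "d \<longlonglongrightarrow> D" unfolding D_def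
    by (rule LIMSEQ_incseq_SUP[OF _ d_inc]) (use d_bdd in \<open>auto intro!: bdd_aboveI[of _ "4 * integral\<^sup>L M G"]\<close>)
  have dD: "d N \<le> D" for N using incseq_le[OF d_inc d_lim] by simp
  have "\<forall>N. \<exists>h. h \<in> C N \<and> Q h < d N + 1 / (real N + 1)"
  proof
    fix N
    have "Inf (Q ` C N) < d N + 1 / (real N + 1)" unfolding d_def by simp
    then obtain q where "q \<in> Q ` C N" "q < d N + 1 / (real N + 1)"
      using cInf_lessD[of "Q ` C N"] ne[of N] by blast
    thus "\<exists>h. h \<in> C N \<and> Q h < d N + 1 / (real N + 1)" by auto
  qed
  then obtain hh where hhC: "\<And>N. hh N \<in> C N" and hhQ: "\<And>N. Q (hh N) < d N + 1 / (real N + 1)"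
    by metis
  define eps where "eps N = 2 * (D - d N) + 4 / (real N + 1)" for N
  have cauchyQ: "Q (\<lambda>x. hh i x - hh j x) \<le> eps N" if "N \<le> i" "i \<le> j" for N i j
  proof -
    have ai: "adm (hh i)" "adm (hh j)" using Cadm hhC by auto
    have "hh j \<in> C i" using C_anti[OF that(2)] hhC by auto
    hence "(\<lambda>x. (hh i x + hh j x) / 2) \<in> C i" using hhC mid by auto
    hence m: "d i \<le> Q (\<lambda>x. (hh i x + hh j x) / 2)" by (rule d_le)
    have "1 / (real j + 1) \<le> 1 / (real i + 1)" using that by (simp add: frac_le)
    moreover have "1 / (real i + 1) \<le> 1 / (real N + 1)" using that by (simp add: frac_le)
    moreover have "d N \<le> d i" using d_inc that unfolding incseq_def by auto
    ultimately have "Q (\<lambda>x. (hh i x - hh j x) / 2) \<le> (D - d N) / 2 + 1 / (real N + 1)"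
      using para[OF ai] m hhQ[of i] hhQ[of j] dD[of j] by argo
    thus ?thesis using Qscale[of "hh i" "hh j"] unfolding eps_def by linarith
  qed
  have Qsym: "Q (\<lambda>x. a x - b x) = Q (\<lambda>x. b x - a x)" for a b
    unfolding Q_def by (simp only: power2_commute)
  have eps_lim: "eps \<longlonglongrightarrow> 0"
  proof -
    have "(\<lambda>N. 2 * (D - d N) + 4 * inverse (real (Suc N))) \<longlonglongrightarrow> 2 * (D - D) + 4 * 0"
      by (intro tendsto_intros d_lim LIMSEQ_inverse_real_of_nat)
    moreover have "eps = (\<lambda>N. 2 * (D - d N) + 4 * inverse (real (Suc N)))"
      unfolding eps_def by (auto simp: field_simps)
    ultimately show ?thesis by simp
  qed
  have IW: "integral\<^sup>L M W \<ge> 0" by (intro integral_nonneg_AE AE_I2) (simp add: Wpos less_imp_le)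
  have "\<exists>r. strict_mono r \<and> (AE x in M. Cauchy (\<lambda>i. hh (r i) x))"
  proof (rule cauchy_L1_AE_cauchy_subseq[of M hh])
    fix n show "integrable M (hh n)"
      by (rule Bochner_Integration.integrable_bound[where f="G"])
         (use Gint meas[OF hhC] in \<open>auto intro!: AE_I2 intro: order_trans[OF bnd[OF hhC]]\<close>)
  next
    fix e :: real assume e: "e > 0"
    define t where "t = 2 * (integral\<^sup>L M W + 1) / e"
    have t: "t > 0" using e IW by (simp add: t_def)
    obtain N where N: "\<forall>n\<ge>N. norm (eps n - 0) < e / (2 * t)"
      using LIMSEQ_D[OF eps_lim, of "e / (2*t)"] e t by auto
    show "\<exists>N. \<forall>i\<ge>N. \<forall>j\<ge>N. (\<integral>x. norm (hh i x - hh j x) \<partial>M) < e"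
    proof (intro exI allI impI)
      fix i j assume ij: "N \<le> i" "N \<le> j"
      have adm: "adm (\<lambda>x. hh i x - hh j x)"
      proof -
        have "\<bar>hh i x - hh j x\<bar> \<le> 2 * G x" if "x \<in> space M" for x
          using bnd[OF hhC[of i] that] bnd[OF hhC[of j] that] by linarith
        thus ?thesis using meas[OF hhC[of i]] meas[OF hhC[of j]] unfolding adm_def by auto
      qed
      have Qs: "Q (\<lambda>x. hh i x - hh j x) < e / (2 * t)"
      proof (cases "i \<le> j")
        case True thus ?thesis using cauchyQ[of N i j] ij N by force
      next
        case False thus ?thesis using cauchyQ[of N j i] ij N Qsym[of "hh i" "hh j"] by force
      qed
      have f1: "(\<integral>x. \<bar>hh i x - hh j x\<bar> \<partial>M) \<le> (t * Q (\<lambda>x. hh i x - hh j x) + integral\<^sup>L M W / t) / 2"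
        using L1[OF adm t] by simp
      have f2: "t * Q (\<lambda>x. hh i x - hh j x) < e / 2" using Qs t by (simp add: field_simps)
      have f3: "integral\<^sup>L M W / t \<le> e / 2" using e IW by (simp add: t_def field_simps)
      have "(\<integral>x. \<bar>hh i x - hh j x\<bar> \<partial>M) < e" using f1 f2 f3 e by argo
      thus "(\<integral>x. norm (hh i x - hh j x) \<partial>M) < e" by simp
    qed
  qed blast
  then obtain r where r: "strict_mono r" "AE x in M. Cauchy (\<lambda>i. hh (r i) x)" by blast
  define \<phi> where "\<phi> x = lim (\<lambda>i. hh (r i) x)" for x
  have "\<phi> \<in> borel_measurable M" unfolding \<phi>_def
    by (rule borel_measurable_lim_metric) (use meas hhC in auto)
  moreover have "AE x in M. (\<lambda>k. hh (r k) x) \<longlonglongrightarrow> \<phi> x"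
    using r(2) by eventually_elim (simp add: \<phi>_def Cauchy_convergent_iff convergent_LIMSEQ_iff)
  moreover have "\<forall>k. hh (r k) \<in> C k" using hhC C_anti seq_suble[OF r(1)] by blast
  ultimately show ?thesis by (intro exI[of _ "\<lambda>k. hh (r k)"] exI[of _ \<phi>]) auto
qed
theorem mainTheorem9:
  fixes M :: "'x measure" and T :: "'x \<Rightarrow> 'x"
    and c :: "int \<Rightarrow> 'x \<Rightarrow> 'b::banach \<Rightarrow> 'b"
    and s :: "'x \<Rightarrow> int \<Rightarrow> int \<Rightarrow> 'b"
  assumes std: "standard_prob_space M"
    and mpt: "invertible_mpt M T"
    and erg: "ergodic M T"
    and sep: "separable_banach TYPE('b)"
    and refl: "reflexive_banach TYPE('b)"
    and c_isom: "\<And>n x. x \<in> space M \<Longrightarrow> lin_isometry (c n x)"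
    and c_cocycle: "\<And>n m x. x \<in> space M \<Longrightarrow> c (n + m) x = c n x \<circ> c m (Tpow M T n x)"
    and c_meas: "\<And>n b. (\<lambda>x. c n x b) \<in> borel_measurable M"
    and s_add: "\<And>x m l n. x \<in> space M \<Longrightarrow> s x m l + s x l n = s x m n"
    and s_equiv: "\<And>x k m n. x \<in> space M \<Longrightarrow> c k x (s (Tpow M T k x) m n) = s x (m + k) (n + k)"
    and s_weak_meas: "\<And>m n (f :: 'b \<Rightarrow>\<^sub>L real). (\<lambda>x. blinfun_apply f (s x m n)) \<in> borel_measurable M"
    and s_int: "\<And>n. integrable M (\<lambda>x. norm (s x 0 n))"
  shows "\<exists>(\<phi> :: 'x \<Rightarrow> real) (r :: nat \<Rightarrow> 'x \<Rightarrow> real).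
           integrable M \<phi> \<and>
           integral\<^sup>L M \<phi> = lim (\<lambda>n. (\<integral>x. norm (s x 0 (int n)) \<partial>M) / real n) \<and>
           (\<forall>n\<ge>1. r n \<in> borel_measurable M \<and> (\<forall>x\<in>space M. 0 \<le> r n x)) \<and>
           (AE x in M. (\<forall>n\<ge>1. norm (s x 0 (int n)) = (\<Sum>k<n. \<phi> ((T ^^ k) x)) + r n x) \<and>
                       (\<forall>n\<ge>1. \<forall>m\<ge>1. r (n + m) x \<le> r n x + r m ((T ^^ n) x))) \<and>
           (\<lambda>n. (\<integral>x. r n x \<partial>M) / real n) \<longlonglongrightarrow> 0"
proof -
  interpret prob_space M using std unfolding standard_prob_space_def by auto
  have Tm[measurable]: "T \<in> measurable M M" using mpt unfolding invertible_mpt_def by auto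
  have Tpre: "\<And>A. A \<in> sets M \<Longrightarrow> emeasure M (T -` A \<inter> space M) = emeasure M A"
    using mpt unfolding invertible_mpt_def by auto
  have Tkm[measurable]: "T ^^ k \<in> measurable M M" for k
    by (induction k) (auto simp: measurable_ident_sets)
  have Tks: "(T ^^ k) x \<in> space M" if "x \<in> space M" for k x
    using measurable_space[OF Tkm that] .
  have distrT: "distr M M T = M"
    by (rule measure_eqI) (auto simp: emeasure_distr Tpre)
  have distrTk: "distr M M (T ^^ k) = M" for k
  proof (induction k)
    case 0 show ?case by (simp add: distr_id2 measurable_ident_sets)
  next
    case (Suc k)
    have "distr M M (T ^^ Suc k) = distr (distr M M (T ^^ k)) M T"
      by (simp add: distr_distr)
    also have "\<dots> = M" using Suc distrT by simp
    finally show ?case .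
  qed
  have int_pres: "integrable M (\<lambda>x. f ((T ^^ k) x))" "(\<integral>x. f ((T ^^ k) x) \<partial>M) = integral\<^sup>L M f"
    if "integrable M f" for f :: "'x \<Rightarrow> real" and k
  proof -
    have fm: "f \<in> borel_measurable M" using that by auto
    show "integrable M (\<lambda>x. f ((T ^^ k) x))"
      using integrable_distr_eq[OF Tkm[of k] fm] that distrTk[of k] by simp
    show "(\<integral>x. f ((T ^^ k) x) \<partial>M) = integral\<^sup>L M f"
      using integral_distr[OF Tkm[of k] fm] distrTk[of k] by simp
  qed
  have AE_pull: "AE x in M. P ((T ^^ k) x)" if "AE x in M. P x" for P k
  proof -
    from that obtain N where N: "{x\<in>space M. \<not> P x} \<subseteq> N" "N \<in> null_sets M"
      by (auto elim!: AE_E)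
    have "(T ^^ k) -` N \<inter> space M \<in> null_sets M"
    proof -
      have "emeasure M ((T ^^ k) -` N \<inter> space M) = emeasure (distr M M (T ^^ k)) N"
        using N(2) by (simp add: emeasure_distr null_setsD2)
      also have "\<dots> = 0" using N(2) distrTk[of k] by (simp add: null_setsD1)
      moreover have "(T ^^ k) -` N \<inter> space M \<in> sets M"
        using measurable_sets[OF Tkm[of k] null_setsD2[OF N(2)]] .
      ultimately show ?thesis by (auto intro: null_setsI)
    qed
    moreover have "{x\<in>space M. \<not> P ((T ^^ k) x)} \<subseteq> (T ^^ k) -` N \<inter> space M"
      using N(1) Tks by auto
    ultimately show ?thesis by (rule AE_I')
  qed
  define \<rho> where "\<rho> n x = norm (s x 0 (int n))" for n x
  have \<rho>int: "integrable M (\<rho> n)" for n unfolding \<rho>_def by (rule s_int)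
  have \<rho>m[measurable]: "\<rho> n \<in> borel_measurable M" for n using \<rho>int by auto
  have \<rho>nn: "0 \<le> \<rho> n x" for n x unfolding \<rho>_def by simp
  have s_zero: "s x m m = 0" if "x \<in> space M" for x m
    using s_add[OF that, of m m m] by simp
  have s_anti: "s x m n = - s x n m" if "x \<in> space M" for x m n
    using s_add[OF that, of m n m] s_zero[OF that] by (simp add: eq_neg_iff_add_eq_0)
  have Tpow_nat: "Tpow M T (int k) = T ^^ k" for k by (simp add: Tpow_def)
  have shift: "norm (s ((T ^^ k) x) m n) = norm (s x (m + int k) (n + int k))" if "x \<in> space M" for x k m n
  proof -
    have "s x (m + int k) (n + int k) = c (int k) x (s ((T ^^ k) x) m n)"
      using s_equiv[OF that, of "int k" m n] by (simp add: Tpow_nat)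
    thus ?thesis using c_isom[OF that, of "int k"] unfolding lin_isometry_def by simp
  qed
  define dd where "dd x i j = norm (s x (int i) (int j))" for x i j
  have dd_refl: "dd x a a = 0" if "x \<in> space M" for x a unfolding dd_def using s_zero[OF that] by simp
  have dd_sym: "dd x a b = dd x b a" if "x \<in> space M" for x a b
    unfolding dd_def using s_anti[OF that, of "int a" "int b"] by simp
  have dd_tri: "dd x a c \<le> dd x a b + dd x b c" if "x \<in> space M" for x a b c
    unfolding dd_def using s_add[OF that, of "int a" "int b" "int c"] norm_triangle_ineq
    by metis
  have \<rho>_shift: "\<rho> n ((T ^^ k) x) = dd x k (k + n)" if "x \<in> space M" for n k x
    unfolding \<rho>_def dd_def using shift[OF that, of k 0 "int n"] by (simp add: add.commute)
  have \<rho>_0: "\<rho> n x = dd x 0 n" for n x unfolding \<rho>_def dd_def by simp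
  have \<rho>_sub: "\<rho> (n + m) x \<le> \<rho> n x + \<rho> m ((T ^^ n) x)" if "x \<in> space M" for n m x
    using dd_tri[OF that, of 0 "n+m" n] \<rho>_shift[OF that, of m n] \<rho>_0 by simp
  define a where "a n = integral\<^sup>L M (\<rho> n)" for n
  have a_sub: "a (n + m) \<le> a n + a m" for n m
  proof -
    have "a (n + m) \<le> (\<integral>x. \<rho> n x + \<rho> m ((T ^^ n) x) \<partial>M)"
      unfolding a_def
      by (rule integral_mono) (use \<rho>int int_pres(1)[OF \<rho>int] \<rho>_sub in auto)
    also have "\<dots> = a n + a m"
      unfolding a_def using int_pres[OF \<rho>int[of m], of n] \<rho>int[of n] by simp
    finally show ?thesis .
  qed
  have a_nn: "0 \<le> a n" for n unfolding a_def by (rule integral_nonneg_AE) (simp add: \<rho>nn)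
  define L where "L = Inf ((\<lambda>n. a n / real n) ` {1..})"
  have a_lim: "(\<lambda>n. a n / real n) \<longlonglongrightarrow> L" unfolding L_def by (rule fekete(1)[OF a_sub a_nn])
  have a_ge: "L \<le> a n / real n" if "n \<ge> 1" for n unfolding L_def by (rule fekete(2)[OF a_sub a_nn that])
  have limA: "lim (\<lambda>n. (\<integral>x. norm (s x 0 (int n)) \<partial>M) / real n) = L"
    using a_lim unfolding a_def \<rho>_def by (rule limI)
  have \<rho>0: "\<rho> 0 x = 0" if "x \<in> space M" for x unfolding \<rho>_def using s_zero[OF that, of 0] by simp
  have a0: "a 0 = 0"
  proof -
    have "(\<integral>x. \<rho> 0 x \<partial>M) = (\<integral>x. 0 \<partial>M)" by (rule Bochner_Integration.integral_cong) (auto simp: \<rho>0)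
    thus ?thesis unfolding a_def by simp
  qed
  have \<rho>_T: "\<rho> j (T x) = dd x 1 (1 + j)" if "x \<in> space M" for j x
    using \<rho>_shift[OF that, of j 1] by simp
  define f where "f N x = (\<Sum>j<Suc N. \<rho> (j+1) x - \<rho> j (T x)) / real (Suc N)" for N x
  have fm[measurable]: "f N \<in> borel_measurable M" for N unfolding f_def by measurable
  have fb: "\<bar>f N x\<bar> \<le> \<rho> 1 x" if x: "x \<in> space M" for N x
  proof -
    have t: "\<bar>\<rho> (j+1) x - \<rho> j (T x)\<bar> \<le> \<rho> 1 x" for j
    proof -
      have "dd x 0 (j+1) \<le> dd x 0 1 + dd x 1 (j+1)" using dd_tri[OF x, of 0 "j+1" 1] .
      moreover have "dd x 1 (j+1) \<le> dd x 1 0 + dd x 0 (j+1)" using dd_tri[OF x, of 1 "j+1" 0] .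
      moreover have "dd x 1 0 = dd x 0 1" using dd_sym[OF x] .
      ultimately show ?thesis using \<rho>_T[OF x, of j] \<rho>_0[of "j+1" x] \<rho>_0[of 1 x] by (simp add: add.commute)
    qed
    have "\<bar>\<Sum>j<Suc N. \<rho> (j+1) x - \<rho> j (T x)\<bar> \<le> (\<Sum>j<Suc N. \<rho> 1 x)"
      by (rule order_trans[OF sum_abs sum_mono]) (rule t)
    also have "\<dots> = real (Suc N) * \<rho> 1 x" by simp
    finally show ?thesis unfolding f_def by (simp add: field_simps)
  qed
  have fi: "integral\<^sup>L M (f N) = a (Suc N) / real (Suc N)" for N
  proof -
    have i1: "integrable M (\<lambda>x. \<rho> j (T x))" for j using int_pres(1)[OF \<rho>int[of j], of 1] by simp
    have e1: "(\<integral>x. \<rho> j (T x) \<partial>M) = a j" for j using int_pres(2)[OF \<rho>int[of j], of 1] by (simp add: a_def)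
    have "(\<integral>x. (\<Sum>j<Suc N. \<rho> (j+1) x - \<rho> j (T x)) \<partial>M) = (\<Sum>j<Suc N. (\<integral>x. \<rho> (j+1) x - \<rho> j (T x) \<partial>M))"
      by (rule Bochner_Integration.integral_sum) (use \<rho>int i1 in auto)
    also have "\<dots> = (\<Sum>j<Suc N. a (Suc j) - a j)"
    proof (rule sum.cong[OF HOL.refl])
      fix j
      show "(\<integral>x. \<rho> (j+1) x - \<rho> j (T x) \<partial>M) = a (Suc j) - a j"
        using Bochner_Integration.integral_diff[OF \<rho>int[of "j+1"] i1[of j]] e1[of j] by (simp add: a_def)
    qed
    also have "\<dots> = a (Suc N)" using a0 by (simp add: sum_lessThan_telescope)
    finally show ?thesis unfolding f_def by (simp add: integral_divide_zero)
  qed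
  have fineq: "(\<Sum>k<n. f N ((T ^^ k) x)) \<le> \<rho> n x + 2 / real (Suc N) * (\<Sum>j<n. \<rho> (j+1) x)"
    if x: "x \<in> space M" for N n x
  proof -
    define P where "P = Suc N"
    have fk: "f N ((T ^^ k) x) = (\<Sum>j<P. dd x k (k+j+1) - dd x (k+1) (k+j+1)) / real P" for k
    proof -
      have "\<rho> (j+1) ((T ^^ k) x) = dd x k (k+j+1)" for j using \<rho>_shift[OF x, of "j+1" k] by (simp add: add.assoc)
      moreover have "\<rho> j (T ((T ^^ k) x)) = dd x (k+1) (k+j+1)" for j
        using \<rho>_shift[OF x, of j "Suc k"] by (simp add: add.commute add.left_commute)
      ultimately show ?thesis unfolding f_def P_def by simp
    qed
    have "(\<Sum>k<n. f N ((T ^^ k) x)) = (\<Sum>k<n. \<Sum>j<P. dd x k (k+j+1) - dd x (k+1) (k+j+1)) / real P"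
      by (simp add: fk sum_divide_distrib)
    also have "\<dots> \<le> (real P * dd x 0 n + 2 * (\<Sum>j<n. dd x 0 (j+1))) / real P"
      by (intro divide_right_mono tele_bound dd_refl[OF x] dd_sym[OF x] dd_tri[OF x]) auto
    also have "\<dots> = \<rho> n x + 2 / real (Suc N) * (\<Sum>j<n. \<rho> (j+1) x)"
      by (simp add: P_def \<rho>_0 field_simps)
    finally show ?thesis .
  qed
  define C where "C N = {h. h \<in> borel_measurable M \<and> (\<forall>x\<in>space M. \<bar>h x\<bar> \<le> \<rho> 1 x) \<and> L \<le> integral\<^sup>L M h \<and>
      (\<forall>n. \<forall>x\<in>space M. (\<Sum>k<n. h ((T ^^ k) x)) \<le> \<rho> n x + 2 / real (Suc N) * (\<Sum>j<n. \<rho> (j+1) x))}" for N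
  have Cint: "integrable M h" if "h \<in> C N" for h N
    by (rule Bochner_Integration.integrable_bound[OF \<rho>int[of 1]]) (use that in \<open>auto simp: C_def intro!: AE_I2 intro: order_trans[OF _ abs_ge_self]\<close>)
  have "\<exists>h \<phi>. (\<forall>k. h k \<in> C k) \<and> \<phi> \<in> borel_measurable M \<and> (AE x in M. (\<lambda>k. h k x) \<longlonglongrightarrow> \<phi> x)"
  proof (rule komlos[OF _ \<rho>int[of 1]])
    show "finite_measure M" by (rule finite_measure_axioms)
    show "C N \<noteq> {}" for N
    proof -
      have "f N \<in> C N" unfolding C_def using fb fineq fi a_ge[of "Suc N"] by auto
      thus ?thesis by auto
    qed
    show "C (Suc N) \<subseteq> C N" for N
    proof
      fix h assume h: "h \<in> C (Suc N)"
      have le: "2 / real (Suc (Suc N)) * (\<Sum>j<n. \<rho> (j+1) x) \<le> 2 / real (Suc N) * (\<Sum>j<n. \<rho> (j+1) x)" for n x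
        by (intro mult_right_mono sum_nonneg \<rho>nn) (simp add: frac_le)
      have "(\<Sum>k<n. h ((T ^^ k) x)) \<le> \<rho> n x + 2 / real (Suc N) * (\<Sum>j<n. \<rho> (j+1) x)"
        if "x \<in> space M" for n x
      proof -
        have "(\<Sum>k<n. h ((T ^^ k) x)) \<le> \<rho> n x + 2 / real (Suc (Suc N)) * (\<Sum>j<n. \<rho> (j+1) x)"
          using h that unfolding C_def by blast
        moreover have "2 / real (Suc (Suc N)) * (\<Sum>j<n. \<rho> (j+1) x) \<le> 2 / real (Suc N) * (\<Sum>j<n. \<rho> (j+1) x)"
          by (intro mult_right_mono sum_nonneg \<rho>nn) (simp add: frac_le)
        ultimately show ?thesis by linarith
      qed
      with h show "h \<in> C N" unfolding C_def by blast
    qed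
    show "(\<lambda>x. (h x + g x) / 2) \<in> C N" if hC: "h \<in> C N" and gC: "g \<in> C N" for N h g
    proof -
      have hi: "integrable M h" "integrable M g" using Cint hC gC by auto
      have hm[measurable]: "h \<in> borel_measurable M" "g \<in> borel_measurable M" using hi by auto
      have I: "integral\<^sup>L M (\<lambda>x. (h x + g x) / 2) = (integral\<^sup>L M h + integral\<^sup>L M g) / 2"
        using hi by (simp add: integral_divide_zero)
      have Lh: "L \<le> integral\<^sup>L M h" "L \<le> integral\<^sup>L M g" using hC gC unfolding C_def by auto
      have B: "\<bar>(h x + g x) / 2\<bar> \<le> \<rho> 1 x" if "x \<in> space M" for x
      proof -
        have "\<bar>h x\<bar> \<le> \<rho> 1 x" "\<bar>g x\<bar> \<le> \<rho> 1 x" using hC gC that unfolding C_def by auto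
        thus ?thesis by (simp add: abs_le_iff)
      qed
      have S: "(\<Sum>k<n. (h ((T ^^ k) x) + g ((T ^^ k) x)) / 2) \<le> \<rho> n x + 2 / real (Suc N) * (\<Sum>j<n. \<rho> (j+1) x)"
        if "x \<in> space M" for n x
      proof -
        have "(\<Sum>k<n. (h ((T ^^ k) x) + g ((T ^^ k) x)) / 2) = ((\<Sum>k<n. h ((T ^^ k) x)) + (\<Sum>k<n. g ((T ^^ k) x))) / 2"
          by (simp only: sum_divide_distrib[symmetric] sum.distrib)
        moreover have "(\<Sum>k<n. h ((T ^^ k) x)) \<le> \<rho> n x + 2 / real (Suc N) * (\<Sum>j<n. \<rho> (j+1) x)"
          using hC that unfolding C_def by blast
        moreover have "(\<Sum>k<n. g ((T ^^ k) x)) \<le> \<rho> n x + 2 / real (Suc N) * (\<Sum>j<n. \<rho> (j+1) x)"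
          using gC that unfolding C_def by blast
        ultimately show ?thesis by argo
      qed
      show ?thesis unfolding C_def using I Lh B S by auto
    qed
    show "h \<in> borel_measurable M" if "h \<in> C N" for h N using that unfolding C_def by auto
    show "\<bar>h x\<bar> \<le> \<rho> 1 x" if "h \<in> C N" "x \<in> space M" for h N x using that unfolding C_def by auto
  qed
  then obtain hk \<phi> where hkC: "\<And>k. hk k \<in> C k" and \<phi>m[measurable]: "\<phi> \<in> borel_measurable M"
    and hk_lim: "AE x in M. (\<lambda>k. hk k x) \<longlonglongrightarrow> \<phi> x" by blast
  have hkm[measurable]: "hk k \<in> borel_measurable M" for k using hkC[of k] unfolding C_def by auto
  have hkb: "AE x in M. norm (hk k x) \<le> \<rho> 1 x" for k
    using hkC[of k] unfolding C_def by (auto intro!: AE_I2)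
  have \<phi>int: "integrable M \<phi>"
    by (rule integrable_dominated_convergence[OF \<phi>m hkm \<rho>int[of 1] hk_lim hkb])
  have \<phi>lim: "(\<lambda>k. integral\<^sup>L M (hk k)) \<longlonglongrightarrow> integral\<^sup>L M \<phi>"
    by (rule integral_dominated_convergence[OF \<phi>m hkm \<rho>int[of 1] hk_lim hkb])
  have \<phi>ge: "L \<le> integral\<^sup>L M \<phi>"
    by (rule LIMSEQ_le_const[OF \<phi>lim]) (use hkC in \<open>auto simp: C_def\<close>)
  have \<phi>Tint: "integrable M (\<lambda>x. \<phi> ((T ^^ k) x))" for k using int_pres(1)[OF \<phi>int] .
  have \<phi>T: "(\<integral>x. \<phi> ((T ^^ k) x) \<partial>M) = integral\<^sup>L M \<phi>" for k using int_pres(2)[OF \<phi>int] .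
  have Sint: "integrable M (\<lambda>x. \<Sum>k<n. \<phi> ((T ^^ k) x))" for n using \<phi>Tint by auto
  have Sintg: "(\<integral>x. (\<Sum>k<n. \<phi> ((T ^^ k) x)) \<partial>M) = real n * integral\<^sup>L M \<phi>" for n
    by (subst Bochner_Integration.integral_sum) (use \<phi>Tint \<phi>T in auto)
  have AEall: "AE x in M. \<forall>i. (\<lambda>k. hk k ((T ^^ i) x)) \<longlonglongrightarrow> \<phi> ((T ^^ i) x)"
    unfolding AE_all_countable by (intro allI AE_pull hk_lim)
  have key: "AE x in M. \<forall>n. (\<Sum>i<n. \<phi> ((T ^^ i) x)) \<le> \<rho> n x"
    using AEall AE_space
  proof eventually_elim
    case (elim x)
    show ?case
    proof
      fix n
      have l1: "(\<lambda>k. \<Sum>i<n. hk k ((T ^^ i) x)) \<longlonglongrightarrow> (\<Sum>i<n. \<phi> ((T ^^ i) x))"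
        by (intro tendsto_sum) (use elim in auto)
      have l2: "(\<lambda>k. \<rho> n x + 2 * inverse (real (Suc k)) * (\<Sum>j<n. \<rho> (j+1) x)) \<longlonglongrightarrow> \<rho> n x + 2 * 0 * (\<Sum>j<n. \<rho> (j+1) x)"
        by (intro tendsto_intros LIMSEQ_inverse_real_of_nat)
      have le: "(\<Sum>i<n. hk k ((T ^^ i) x)) \<le> \<rho> n x + 2 * inverse (real (Suc k)) * (\<Sum>j<n. \<rho> (j+1) x)" for k
        using hkC[of k] elim(2) unfolding C_def by (simp add: divide_inverse)
      show "(\<Sum>i<n. \<phi> ((T ^^ i) x)) \<le> \<rho> n x"
        using LIMSEQ_le[OF l1 l2] le by simp
    qed
  qed
  have \<phi>le: "integral\<^sup>L M \<phi> \<le> L"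
  proof (rule LIMSEQ_le_const[OF a_lim], intro exI allI impI)
    fix n :: nat assume n: "1 \<le> n"
    have "real n * integral\<^sup>L M \<phi> \<le> a n"
      unfolding Sintg[symmetric] a_def
      by (rule integral_mono_AE[OF Sint \<rho>int]) (use key in auto)
    thus "integral\<^sup>L M \<phi> \<le> a n / real n" using n by (simp add: pos_le_divide_eq mult.commute)
  qed
  have \<phi>eq: "integral\<^sup>L M \<phi> = L" using \<phi>le \<phi>ge by simp
  define r where "r n x = max 0 (\<rho> n x - (\<Sum>k<n. \<phi> ((T ^^ k) x)))" for n x
  have rm: "r n \<in> borel_measurable M" for n unfolding r_def by measurable
  have rnn: "0 \<le> r n x" for n x unfolding r_def by simp
  have req: "AE x in M. \<forall>n. \<rho> n x = (\<Sum>k<n. \<phi> ((T ^^ k) x)) + r n x"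
    using key by eventually_elim (auto simp: r_def)
  have rsub: "r (n + m) x \<le> r n x + r m ((T ^^ n) x)" if x: "x \<in> space M" for n m x
  proof -
    have split: "(\<Sum>k<n+m. \<phi> ((T ^^ k) x)) = (\<Sum>k<n. \<phi> ((T ^^ k) x)) + (\<Sum>k<m. \<phi> ((T ^^ k) ((T ^^ n) x)))"
    proof -
      have "(T ^^ k) ((T ^^ n) x) = (T ^^ (n + k)) x" for k by (simp add: funpow_add add.commute)
      thus ?thesis by (simp add: sum_split_add)
    qed
    have "\<rho> (n+m) x - (\<Sum>k<n+m. \<phi> ((T ^^ k) x))
        \<le> (\<rho> n x - (\<Sum>k<n. \<phi> ((T ^^ k) x))) + (\<rho> m ((T ^^ n) x) - (\<Sum>k<m. \<phi> ((T ^^ k) ((T ^^ n) x))))"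
      using \<rho>_sub[OF x, of n m] split by simp
    thus ?thesis unfolding r_def by simp
  qed
  have rint: "integral\<^sup>L M (r n) = a n - real n * L" for n
  proof -
    have "integral\<^sup>L M (r n) = (\<integral>x. \<rho> n x - (\<Sum>k<n. \<phi> ((T ^^ k) x)) \<partial>M)"
    proof (rule integral_cong_AE[OF rm])
      show "(\<lambda>x. \<rho> n x - (\<Sum>k<n. \<phi> ((T ^^ k) x))) \<in> borel_measurable M" by measurable
      show "AE x in M. r n x = \<rho> n x - (\<Sum>k<n. \<phi> ((T ^^ k) x))"
        using req by eventually_elim simp
    qed
    also have "\<dots> = a n - real n * L"
      using Bochner_Integration.integral_diff[OF \<rho>int[of n] Sint[of n]] Sintg[of n] \<phi>eq by (simp add: a_def)
    finally show ?thesis .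
  qed
  have rlim: "(\<lambda>n. integral\<^sup>L M (r n) / real n) \<longlonglongrightarrow> 0"
  proof -
    have "(\<lambda>n. a n / real n - L) \<longlonglongrightarrow> L - L" by (intro tendsto_intros a_lim)
    hence t: "(\<lambda>n. a n / real n - L) \<longlonglongrightarrow> 0" by simp
    have "\<forall>\<^sub>F n in sequentially. integral\<^sup>L M (r n) / real n = a n / real n - L"
      using eventually_ge_at_top[of 1]
    proof eventually_elim
      case (elim n)
      thus ?case unfolding rint by (simp add: diff_divide_distrib)
    qed
    hence "((\<lambda>n. integral\<^sup>L M (r n) / real n) \<longlonglongrightarrow> 0) \<longleftrightarrow> ((\<lambda>n. a n / real n - L) \<longlonglongrightarrow> 0)"
      by (rule tendsto_cong)
    thus ?thesis using t by simp
  qed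
  show ?thesis
  proof (intro exI[of _ \<phi>] exI[of _ r] conjI)
    show "integrable M \<phi>" by (rule \<phi>int)
    show "integral\<^sup>L M \<phi> = lim (\<lambda>n. (\<integral>x. norm (s x 0 (int n)) \<partial>M) / real n)" using \<phi>eq limA by simp
    show "\<forall>n\<ge>1. r n \<in> borel_measurable M \<and> (\<forall>x\<in>space M. 0 \<le> r n x)" using rm rnn by auto
    show "AE x in M. (\<forall>n\<ge>1. norm (s x 0 (int n)) = (\<Sum>k<n. \<phi> ((T ^^ k) x)) + r n x) \<and>
                     (\<forall>n\<ge>1. \<forall>m\<ge>1. r (n + m) x \<le> r n x + r m ((T ^^ n) x))"
      using req AE_space
    proof eventually_elim
      case (elim x)
      have "\<forall>n\<ge>1. norm (s x 0 (int n)) = (\<Sum>k<n. \<phi> ((T ^^ k) x)) + r n x"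
        using elim(1) unfolding \<rho>_def by blast
      moreover have "\<forall>n\<ge>1. \<forall>m\<ge>1. r (n + m) x \<le> r n x + r m ((T ^^ n) x)"
        using rsub[OF elim(2)] by blast
      ultimately show ?case by blast
    qed
    show "(\<lambda>n. integral\<^sup>L M (r n) / real n) \<longlonglongrightarrow> 0" by (rule rlim)
  qed
qed

end
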